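(* Let $(\mathcal K,[\cdot,\cdot])$ be a Krein space and let $T$ be a closed, densely defined linear operator in $\mathcal K$ such that $\rho(T^{[*]}T)\neq\emptyset$ and $\rho(TT^{[*]})\neq\emptyset$. Then $$\sigma(T^{[*]}T)\setminus\{0\}=\sigma(TT^{[*]})\setminus\{0\},$$ and there exists a constant $C>0$ depending only on $T$ such that for all $\lambda,\mu\in\rho(T^{[*]}T)$ with $\lambda\neq0$, $$\|(T^{[*]}T-\lambda)^{-1}\|\le\frac{C\,M_1(\lambda)M_2(\mu)}{|\lambda|}\Big(|\mu|+|\lambda-\mu|\,(2+|\lambda|)(2+|\mu|)\Big),$$ where $M_1(\lambda):=\max\{1,\|(TT^{[*]}-\lambda)^{-1}\|\}$ and $M_2(\mu):=\max\{1,\|(T^{[*]}T-\mu)^{-1}\|\}$.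
   Context: $\mathcal K$ is equipped with a Banach norm $\|\cdot\|$ for which $[\cdot,\cdot]$ is continuous. $T^{[*]}$ is the Krein space adjoint of $T$; products have natural domains. For an operator $S$ in $\mathcal K$, $\rho(S)$ is the set of $\lambda\in\mathbb C$ with $S-\lambda:\operatorname{dom}S\to\mathcal K$ bijective and $(S-\lambda)^{-1}$ bounded; $\sigma(S)=\mathbb C\setminus\rho(S)$. *)

theory Defs
  imports "HOL-Analysis.Analysis"
begin

text \<open>HOL-Analysis has no complex vector spaces.  A complex Banach space is modelled
  as a real Banach space of type 'a together with a map J (multiplication by i).\<close>

definition cscale :: "('a::real_vector \<Rightarrow> 'a) \<Rightarrow> complex \<Rightarrow> 'a \<Rightarrow> 'a" where
  "cscale J c x = Re c *\<^sub>R x + Im c *\<^sub>R J x"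

definition complex_structure :: "('a::real_normed_vector \<Rightarrow> 'a) \<Rightarrow> bool" where
  "complex_structure J \<longleftrightarrow> linear J \<and> (\<forall>x. J (J x) = - x)
     \<and> (\<forall>c x. norm (cscale J c x) = cmod c * norm x)"

definition csubspace :: "('a::real_vector \<Rightarrow> 'a) \<Rightarrow> 'a set \<Rightarrow> bool" where
  "csubspace J S \<longleftrightarrow> 0 \<in> S \<and> (\<forall>x\<in>S. \<forall>y\<in>S. x + y \<in> S)
     \<and> (\<forall>c. \<forall>x\<in>S. cscale J c x \<in> S)"

definition hermitian_form :: "('a::real_vector \<Rightarrow> 'a) \<Rightarrow> ('a \<Rightarrow> 'a \<Rightarrow> complex) \<Rightarrow> bool" where
  "hermitian_form J ip \<longleftrightarrow>
     (\<forall>x y z. ip (x + y) z = ip x z + ip y z)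
   \<and> (\<forall>c x y. ip (cscale J c x) y = c * ip x y)
   \<and> (\<forall>x y. ip y x = cnj (ip x y))"

definition hilbert_part :: "('a::real_vector \<Rightarrow> 'a \<Rightarrow> complex) \<Rightarrow> real \<Rightarrow> 'a set \<Rightarrow> bool" where
  "hilbert_part ip s S \<longleftrightarrow>
     (\<forall>x\<in>S. x \<noteq> 0 \<longrightarrow> s * Re (ip x x) > 0)
   \<and> (\<forall>X::nat \<Rightarrow> 'a. (\<forall>n. X n \<in> S) \<and>
          (\<forall>e>0. \<exists>N. \<forall>m\<ge>N. \<forall>n\<ge>N. s * Re (ip (X m - X n) (X m - X n)) < e)
        \<longrightarrow> (\<exists>x\<in>S. \<forall>e>0. \<exists>N. \<forall>n\<ge>N. s * Re (ip (X n - x) (X n - x)) < e))"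

definition krein_space :: "('a::{real_normed_vector,banach} \<Rightarrow> 'a) \<Rightarrow> ('a \<Rightarrow> 'a \<Rightarrow> complex) \<Rightarrow> bool" where
  "krein_space J ip \<longleftrightarrow> complex_structure J \<and> hermitian_form J ip
   \<and> (\<exists>c. \<forall>x y. cmod (ip x y) \<le> c * norm x * norm y)
   \<and> (\<exists>Kp Km. csubspace J Kp \<and> csubspace J Km \<and> Kp \<inter> Km = {0}
        \<and> (\<forall>x. \<exists>p\<in>Kp. \<exists>m\<in>Km. x = p + m)
        \<and> (\<forall>p\<in>Kp. \<forall>m\<in>Km. ip p m = 0)
        \<and> hilbert_part ip 1 Kp \<and> hilbert_part ip (-1) Km)"

type_synonym 'a lop = "'a set \<times> ('a \<Rightarrow> 'a)"

definition linear_op :: "('a::real_vector \<Rightarrow> 'a) \<Rightarrow> 'a lop \<Rightarrow> bool" where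
  "linear_op J T \<longleftrightarrow> csubspace J (fst T)
   \<and> (\<forall>x\<in>fst T. \<forall>y\<in>fst T. snd T (x + y) = snd T x + snd T y)
   \<and> (\<forall>c. \<forall>x\<in>fst T. snd T (cscale J c x) = cscale J c (snd T x))"

definition closed_op :: "('a::topological_space) lop \<Rightarrow> bool" where
  "closed_op T \<longleftrightarrow> closed {(x, snd T x) | x. x \<in> fst T}"

definition densely_defined :: "('a::topological_space) lop \<Rightarrow> bool" where
  "densely_defined T \<longleftrightarrow> closure (fst T) = UNIV"

definition kadj :: "('a \<Rightarrow> 'a \<Rightarrow> complex) \<Rightarrow> 'a lop \<Rightarrow> 'a lop" where
  "kadj ip T = ({y. \<exists>z. \<forall>x\<in>fst T. ip (snd T x) y = ip x z},
               (\<lambda>y. THE z. \<forall>x\<in>fst T. ip (snd T x) y = ip x z))"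

definition op_comp :: "'a lop \<Rightarrow> 'a lop \<Rightarrow> 'a lop" where
  "op_comp A B = ({x \<in> fst B. snd B x \<in> fst A}, snd A \<circ> snd B)"

definition resolvent :: "('a::real_vector \<Rightarrow> 'a) \<Rightarrow> 'a lop \<Rightarrow> complex \<Rightarrow> 'a \<Rightarrow> 'a" where
  "resolvent J S l = the_inv_into (fst S) (\<lambda>x. snd S x - cscale J l x)"

definition resolvent_set :: "('a::real_normed_vector \<Rightarrow> 'a) \<Rightarrow> 'a lop \<Rightarrow> complex set" where
  "resolvent_set J S = {l. bij_betw (\<lambda>x. snd S x - cscale J l x) (fst S) UNIV
       \<and> (\<exists>C. \<forall>y. norm (resolvent J S l y) \<le> C * norm y)}"

definition spectrum_op :: "('a::real_normed_vector \<Rightarrow> 'a) \<Rightarrow> 'a lop \<Rightarrow> complex set" where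
  "spectrum_op J S = - resolvent_set J S"

end

theory Submission
  imports Defs
begin

lemma closure_E_half:
  fixes f :: "'a::real_normed_vector \<Rightarrow> 'b::real_normed_vector"
  assumes lin: "linear f"
    and a: "a \<in> closure {x. norm (f x) \<le> c}" and b: "b \<in> closure {x. norm (f x) \<le> c}"
  shows "(1/2) *\<^sub>R (a - b) \<in> closure {x. norm (f x) \<le> c}"
proof -
  obtain A where A: "\<And>n. A n \<in> {x. norm (f x) \<le> c}" "A \<longlonglongrightarrow> a"
    using a closure_sequential by blast
  obtain B where B: "\<And>n. B n \<in> {x. norm (f x) \<le> c}" "B \<longlonglongrightarrow> b"
    using b closure_sequential by blast
  have "norm (f ((1/2) *\<^sub>R (A n - B n))) \<le> c" for n
  proof -
    have "norm (f ((1/2) *\<^sub>R (A n - B n))) = (1/2) * norm (f (A n) - f (B n))"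
      by (simp add: linear_scale[OF lin] linear_diff[OF lin])
    also have "\<dots> \<le> (1/2) * (norm (f (A n)) + norm (f (B n)))"
      by (simp add: norm_triangle_ineq4)
    also have "\<dots> \<le> c" using A(1)[of n] B(1)[of n] by simp
    finally show ?thesis .
  qed
  moreover have "(\<lambda>n. (1/2) *\<^sub>R (A n - B n)) \<longlonglongrightarrow> (1/2) *\<^sub>R (a - b)"
    by (intro tendsto_intros A B)
  ultimately show ?thesis
    unfolding closure_sequential by (intro exI[of _ "\<lambda>n. (1/2) *\<^sub>R (A n - B n)"]) auto
qed

lemma baire_step:
  fixes F :: "nat \<Rightarrow> 'a::banach set"
  assumes cl: "\<And>n. closed (F n)" and U: "\<Union>(range F) = UNIV"
  shows "\<exists>n x0 r. r > 0 \<and> ball x0 r \<subseteq> F n"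
proof -
  have ne: "Met_TC.mtopology interior_of \<Union>(range F) \<noteq> {}"
    using U by (simp add: euclidean_interior_of)
  have "\<exists>T\<in>range F. \<not> (closedin Met_TC.mtopology T \<and> Met_TC.mtopology interior_of T = {})"
  proof (rule ccontr)
    assume "\<not> ?thesis"
    then have "Met_TC.mtopology interior_of \<Union>(range F) = {}"
      by (intro Met_TC.metric_Baire_category_alt) auto
    with ne show False by contradiction
  qed
  then obtain n where "interior (F n) \<noteq> {}"
    using cl by (auto simp: euclidean_interior_of)
  then obtain y where "y \<in> interior (F n)" by blast
  then obtain r where "r > 0" "ball y r \<subseteq> F n"
    using open_contains_ball[of "interior (F n)"] interior_subset[of "F n"] by blast
  then show ?thesis by blast
qed

lemma closed_graph_bound:
  fixes f :: "'a::banach \<Rightarrow> 'b::banach"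
  assumes lin: "linear f"
    and cl: "\<And>X x z. X \<longlonglongrightarrow> x \<Longrightarrow> (\<lambda>n. f (X n)) \<longlonglongrightarrow> z \<Longrightarrow> f x = z"
  shows "\<exists>K\<ge>0. \<forall>x. norm (f x) \<le> K * norm x"
proof -
  define F where "F n = closure {x. norm (f x) \<le> real n}" for n :: nat
  have U: "\<Union>(range F) = UNIV"
  proof -
    have "x \<in> \<Union>(range F)" for x
    proof -
      obtain n :: nat where "norm (f x) \<le> real n" using real_arch_simple by auto
      then have "x \<in> {x. norm (f x) \<le> real n}" by simp
      then have "x \<in> F n" unfolding F_def by (rule closure_subset[THEN subsetD])
      then show ?thesis by blast
    qed
    then show ?thesis by blast
  qed
  have clF: "closed (F n)" for n unfolding F_def by (rule closed_closure)
  obtain n x0 r where r: "r > 0" "ball x0 r \<subseteq> F n"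
    using baire_step[of F, OF clF U] by blast
  define c where "c = real n"
  have c0: "c \<ge> 0" by (simp add: c_def)
  have P: "z \<in> closure {x. norm (f x) \<le> c}" if "norm z < r" for z
  proof -
    have "dist x0 (x0 + z) < r" "dist x0 (x0 - z) < r" using that by (simp_all add: dist_norm)
    then have "x0 + z \<in> F n" "x0 - z \<in> F n" using r(2) by (auto simp: mem_ball)
    then have "(1/2) *\<^sub>R ((x0 + z) - (x0 - z)) \<in> closure {x. norm (f x) \<le> c}"
      unfolding F_def c_def by (rule closure_E_half[OF lin])
    moreover have "(x0 + z) - (x0 - z) = 2 *\<^sub>R z"
      by (simp add: scaleR_2)
    then have "(1/2) *\<^sub>R ((x0 + z) - (x0 - z)) = z" by simp
    ultimately show ?thesis by simp
  qed
  define M where "M = 2 * c / r"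
  have M0: "M \<ge> 0" using c0 r by (simp add: M_def)
  have A: "\<exists>w. norm (f w) \<le> M * norm z \<and> norm (z - w) < e" if e: "e > 0" for z e
  proof (cases "z = 0")
    case True then show ?thesis using e by (intro exI[of _ 0]) (simp add: linear_0[OF lin])
  next
    case False
    define s where "s = r / (2 * norm z)"
    have s0: "s > 0" using False r by (simp add: s_def)
    have "norm (s *\<^sub>R z) < r" using False r by (simp add: s_def)
    then have "s *\<^sub>R z \<in> closure {x. norm (f x) \<le> c}" by (rule P)
    then obtain a where a: "norm (f a) \<le> c" "dist a (s *\<^sub>R z) < s * e"
      using closure_approachable s0 e by (metis mem_Collect_eq mult_pos_pos)
    show ?thesis
    proof (intro exI conjI)
      have "norm (f ((1/s) *\<^sub>R a)) = norm (f a) / s"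
        using s0 by (simp add: linear_scale[OF lin])
      also have "\<dots> \<le> c / s" using a s0 by (simp add: divide_right_mono)
      also have "\<dots> = M * norm z" using False r by (simp add: s_def M_def field_simps)
      finally show "norm (f ((1/s) *\<^sub>R a)) \<le> M * norm z" .
      have "z - (1/s) *\<^sub>R a = (1/s) *\<^sub>R (s *\<^sub>R z - a)" using s0 by (simp add: algebra_simps)
      then have "norm (z - (1/s) *\<^sub>R a) = norm (s *\<^sub>R z - a) / s" using s0 by simp
      also have "\<dots> < e" using a s0 by (simp add: dist_norm norm_minus_commute pos_divide_less_eq mult.commute)
      finally show "norm (z - (1/s) *\<^sub>R a) < e" .
    qed
  qed
  then have "\<forall>z e. \<exists>w. e > 0 \<longrightarrow> norm (f w) \<le> M * norm z \<and> norm (z - w) < e" by blast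
  then obtain W where W0: "\<forall>z e. e > 0 \<longrightarrow> norm (f (W z e)) \<le> M * norm z \<and> norm (z - W z e) < e"
    by metis
  have W: "norm (f (W z e)) \<le> M * norm z \<and> norm (z - W z e) < e" if "e > 0" for z e
    using W0 that by blast
  have main: "norm (f x) \<le> 2 * M * norm x" for x
  proof (cases "x = 0")
    case True then show ?thesis by (simp add: linear_0[OF lin])
  next
    case False
    define Z where "Z = rec_nat x (\<lambda>k z. z - W z (norm x / 2 ^ Suc k))"
    have Z0: "Z 0 = x" and ZS: "Z (Suc k) = Z k - W (Z k) (norm x / 2 ^ Suc k)" for k
      by (simp_all add: Z_def)
    define w where "w k = W (Z k) (norm x / 2 ^ Suc k)" for k
    have wprop: "norm (f (w k)) \<le> M * norm (Z k) \<and> norm (Z (Suc k)) < norm x / 2 ^ Suc k" for k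
      using W[of "norm x / 2 ^ Suc k" "Z k"] False by (simp add: w_def ZS)
    have Zb: "norm (Z k) \<le> norm x / 2 ^ k" for k
    proof (cases k)
      case 0 then show ?thesis by (simp add: Z0)
    next
      case (Suc j) then show ?thesis using wprop[of j] by simp
    qed
    have fwb: "norm (f (w k)) \<le> M * norm x * (1/2) ^ k" for k
    proof -
      have "norm (f (w k)) \<le> M * norm (Z k)" using wprop by blast
      also have "\<dots> \<le> M * (norm x / 2 ^ k)" using Zb[of k] M0 by (rule mult_left_mono)
      finally show ?thesis by (simp add: power_divide)
    qed
    have sg: "summable (\<lambda>k. M * norm x * (1/2) ^ k)"
      by (intro summable_mult summable_geometric) simp
    have sn: "summable (\<lambda>k. norm (f (w k)))"
      by (rule summable_comparison_test[OF _ sg]) (use fwb in auto)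
    have sf: "summable (\<lambda>k. f (w k))" using sn by (rule summable_norm_cancel)
    have tel: "(\<Sum>k<N. w k) = x - Z N" for N
      by (induction N) (simp_all add: Z0 ZS w_def)
    have Zlim: "Z \<longlonglongrightarrow> 0"
    proof (rule Lim_null_comparison[where g="\<lambda>k. norm x * (1/2) ^ k"])
      show "\<forall>\<^sub>F k in sequentially. norm (Z k) \<le> norm x * (1 / 2) ^ k"
        using Zb by (simp add: power_divide)
      show "(\<lambda>k. norm x * (1/2) ^ k) \<longlonglongrightarrow> 0"
        by (intro tendsto_mult_right_zero LIMSEQ_realpow_zero) auto
    qed
    have "(\<lambda>N. x - Z N) \<longlonglongrightarrow> x - 0" by (intro tendsto_intros Zlim)
    moreover have "(\<lambda>N. f (x - Z N)) \<longlonglongrightarrow> (\<Sum>k. f (w k))"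
    proof -
      have "(\<lambda>N. \<Sum>k<N. f (w k)) \<longlonglongrightarrow> (\<Sum>k. f (w k))" using sf by (rule summable_LIMSEQ)
      moreover have "(\<Sum>k<N. f (w k)) = f (x - Z N)" for N
        by (simp add: tel[symmetric] linear_sum[OF lin])
      ultimately show ?thesis by simp
    qed
    ultimately have fx: "f x = (\<Sum>k. f (w k))" using cl by simp
    have "norm (f x) \<le> (\<Sum>k. norm (f (w k)))" unfolding fx using sn by (rule summable_norm)
    also have "\<dots> \<le> (\<Sum>k. M * norm x * (1/2) ^ k)"
      by (rule suminf_le[OF fwb sn sg])
    also have "\<dots> = 2 * M * norm x"
      by (simp add: suminf_mult suminf_geometric)
    finally show ?thesis .
  qed
  show ?thesis using main M0 by (intro exI[of _ "2*M"]) auto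
qed

section \<open>Complex scalar multiplication\<close>

context
  fixes J :: "'a::real_normed_vector \<Rightarrow> 'a"
  assumes cs: "complex_structure J"
begin

lemma J_lin: "linear J" using cs by (simp add: complex_structure_def)
lemma JJ: "J (J x) = - x" using cs by (simp add: complex_structure_def)
lemma norm_cscale: "norm (cscale J c x) = cmod c * norm x" using cs by (simp add: complex_structure_def)

lemma cscale_add_right: "cscale J c (x + y) = cscale J c x + cscale J c y"
  by (simp add: cscale_def linear_add[OF J_lin] algebra_simps)
lemma cscale_add_left: "cscale J (a + b) x = cscale J a x + cscale J b x"
  by (simp add: cscale_def algebra_simps)
lemma cscale_diff_right: "cscale J c (x - y) = cscale J c x - cscale J c y"
  by (simp add: cscale_def linear_diff[OF J_lin] algebra_simps)
lemma cscale_diff_left: "cscale J (a - b) x = cscale J a x - cscale J b x"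
  by (simp add: cscale_def algebra_simps)
lemma cscale_zero_right[simp]: "cscale J c 0 = 0"
  by (simp add: cscale_def linear_0[OF J_lin])
lemma cscale_zero_left[simp]: "cscale J 0 x = 0"
  by (simp add: cscale_def)
lemma cscale_one[simp]: "cscale J 1 x = x"
  by (simp add: cscale_def)
lemma cscale_of_real: "cscale J (complex_of_real r) x = r *\<^sub>R x"
  by (simp add: cscale_def)
lemma cscale_minus_one: "cscale J (-1) x = - x"
  by (simp add: cscale_def)
lemma cscale_minus_right: "cscale J c (- x) = - cscale J c x"
  by (simp add: cscale_def linear_neg[OF J_lin] algebra_simps)
lemma cscale_scaleR: "cscale J c (r *\<^sub>R x) = r *\<^sub>R cscale J c x"
  by (simp add: cscale_def linear_scale[OF J_lin] algebra_simps)
lemma cscale_mult: "cscale J a (cscale J b x) = cscale J (a * b) x"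
  by (simp add: cscale_def linear_add[OF J_lin] linear_scale[OF J_lin] JJ algebra_simps)

section \<open>Linear operators\<close>

context
  fixes A :: "'a lop"
  assumes lin: "linear_op J A"
begin

lemma dom_sub: "csubspace J (fst A)" using lin by (simp add: linear_op_def)
lemma dom0: "0 \<in> fst A" using dom_sub by (simp add: csubspace_def)
lemma dom_add: "x \<in> fst A \<Longrightarrow> y \<in> fst A \<Longrightarrow> x + y \<in> fst A"
  using dom_sub by (simp add: csubspace_def)
lemma dom_cscale: "x \<in> fst A \<Longrightarrow> cscale J c x \<in> fst A"
  using dom_sub by (simp add: csubspace_def)
lemma dom_scaleR: "x \<in> fst A \<Longrightarrow> r *\<^sub>R x \<in> fst A"
  using dom_cscale[of x "complex_of_real r"] by (simp add: cscale_of_real)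
lemma dom_neg: "x \<in> fst A \<Longrightarrow> - x \<in> fst A"
  using dom_scaleR[of x "-1"] by simp
lemma dom_diff: "x \<in> fst A \<Longrightarrow> y \<in> fst A \<Longrightarrow> x - y \<in> fst A"
  using dom_add[of x "- y"] dom_neg[of y] by simp
lemma op_add: "x \<in> fst A \<Longrightarrow> y \<in> fst A \<Longrightarrow> snd A (x + y) = snd A x + snd A y"
  using lin by (simp add: linear_op_def)
lemma op_cscale: "x \<in> fst A \<Longrightarrow> snd A (cscale J c x) = cscale J c (snd A x)"
  using lin by (simp add: linear_op_def)
lemma op_scaleR: "x \<in> fst A \<Longrightarrow> snd A (r *\<^sub>R x) = r *\<^sub>R snd A x"
  using op_cscale[of x "complex_of_real r"] by (simp add: cscale_of_real)
lemma op_0: "snd A 0 = 0"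
  using op_scaleR[OF dom0, of 0] by simp
lemma op_neg: "x \<in> fst A \<Longrightarrow> snd A (- x) = - snd A x"
  using op_scaleR[of x "-1"] by simp
lemma op_diff: "x \<in> fst A \<Longrightarrow> y \<in> fst A \<Longrightarrow> snd A (x - y) = snd A x - snd A y"
  using op_add[of x "- y"] op_neg[of y] dom_neg[of y] by simp

end

lemma op_comp_linear:
  assumes a: "linear_op J A" and b: "linear_op J B"
  shows "linear_op J (op_comp B A)"
proof -
  have "0 \<in> fst (op_comp B A)"
    by (simp add: op_comp_def dom0[OF a] op_0[OF a] dom0[OF b])
  moreover have "x + y \<in> fst (op_comp B A)" if "x \<in> fst (op_comp B A)" "y \<in> fst (op_comp B A)" for x y
    using that by (simp add: op_comp_def dom_add[OF a] op_add[OF a] dom_add[OF b])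
  moreover have "cscale J c x \<in> fst (op_comp B A)" if "x \<in> fst (op_comp B A)" for c x
    using that by (simp add: op_comp_def dom_cscale[OF a] op_cscale[OF a] dom_cscale[OF b])
  moreover have "snd (op_comp B A) (x + y) = snd (op_comp B A) x + snd (op_comp B A) y"
    if "x \<in> fst (op_comp B A)" "y \<in> fst (op_comp B A)" for x y
    using that by (simp add: op_comp_def op_add[OF a] op_add[OF b])
  moreover have "snd (op_comp B A) (cscale J c x) = cscale J c (snd (op_comp B A) x)"
    if "x \<in> fst (op_comp B A)" for c x
    using that by (simp add: op_comp_def op_cscale[OF a] op_cscale[OF b])
  ultimately show ?thesis unfolding linear_op_def csubspace_def by blast
qed

section \<open>Resolvents\<close>

context
  fixes S :: "'a lop" and l :: complex
  assumes lin: "linear_op J S" and lr: "l \<in> resolvent_set J S"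
begin

lemma res_bij: "bij_betw (\<lambda>x. snd S x - cscale J l x) (fst S) UNIV"
  using lr by (simp add: resolvent_set_def)

lemma res_inj: "inj_on (\<lambda>x. snd S x - cscale J l x) (fst S)"
  using res_bij by (simp add: bij_betw_def)
lemma res_surj: "y \<in> (\<lambda>x. snd S x - cscale J l x) ` fst S"
  using res_bij by (simp add: bij_betw_def)

lemma res_in: "resolvent J S l y \<in> fst S"
  unfolding resolvent_def by (rule the_inv_into_into[OF res_inj res_surj subset_refl])

lemma res_eq: "snd S (resolvent J S l y) - cscale J l (resolvent J S l y) = y"
  unfolding resolvent_def by (rule f_the_inv_into_f[OF res_inj res_surj])

lemma res_unique: assumes "x \<in> fst S" "snd S x - cscale J l x = y" shows "resolvent J S l y = x"
  unfolding resolvent_def using the_inv_into_f_f[OF res_inj assms(1)] assms(2) by simp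

lemma res_add: "resolvent J S l (y + z) = resolvent J S l y + resolvent J S l z"
proof (rule res_unique)
  show "resolvent J S l y + resolvent J S l z \<in> fst S" by (rule dom_add[OF lin res_in res_in])
  have "snd S (resolvent J S l y + resolvent J S l z) - cscale J l (resolvent J S l y + resolvent J S l z)
     = (snd S (resolvent J S l y) - cscale J l (resolvent J S l y)) + (snd S (resolvent J S l z) - cscale J l (resolvent J S l z))"
    by (simp add: op_add[OF lin res_in res_in] cscale_add_right)
  then show "snd S (resolvent J S l y + resolvent J S l z) - cscale J l (resolvent J S l y + resolvent J S l z) = y + z"
    by (simp add: res_eq)
qed

lemma res_cscale: "resolvent J S l (cscale J c y) = cscale J c (resolvent J S l y)"
proof (rule res_unique)
  show "cscale J c (resolvent J S l y) \<in> fst S" by (rule dom_cscale[OF lin res_in])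
  have "snd S (cscale J c (resolvent J S l y)) - cscale J l (cscale J c (resolvent J S l y))
     = cscale J c (snd S (resolvent J S l y) - cscale J l (resolvent J S l y))"
    by (simp add: op_cscale[OF lin res_in] cscale_diff_right cscale_mult mult.commute)
  then show "snd S (cscale J c (resolvent J S l y)) - cscale J l (cscale J c (resolvent J S l y)) = cscale J c y"
    by (simp add: res_eq)
qed

lemma res_scaleR: "resolvent J S l (r *\<^sub>R y) = r *\<^sub>R resolvent J S l y"
  using res_cscale[of "complex_of_real r" y] by (simp add: cscale_of_real)

lemma res_linear: "linear (resolvent J S l)"
  by (rule linearI) (simp_all add: res_add res_scaleR)

lemma res_bounded: "\<exists>C. \<forall>y. norm (resolvent J S l y) \<le> C * norm y"
  using lr by (simp add: resolvent_set_def)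

lemma res_bl: "bounded_linear (resolvent J S l)"
proof -
  obtain C where "\<forall>y. norm (resolvent J S l y) \<le> C * norm y" using res_bounded by blast
  then show ?thesis
    by (intro bounded_linear_intro[where K=C]) (simp_all add: res_add res_scaleR mult.commute)
qed

lemma res_onorm: "norm (resolvent J S l y) \<le> onorm (resolvent J S l) * norm y"
  by (rule onorm[OF res_bl])

end
end

definition seq_closed :: "'a::topological_space lop \<Rightarrow> bool" where
  "seq_closed A \<longleftrightarrow> (\<forall>X x z. (\<forall>n. X n \<in> fst A) \<longrightarrow> X \<longlonglongrightarrow> x \<longrightarrow> (\<lambda>n. snd A (X n)) \<longlonglongrightarrow> z
      \<longrightarrow> x \<in> fst A \<and> snd A x = z)"

lemma CG_comp:
  fixes J :: "'a::banach \<Rightarrow> 'a" and R :: "'a \<Rightarrow> 'a"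
  assumes cs: "complex_structure J" and lin: "linear_op J A" and cl: "seq_closed A"
    and bl: "bounded_linear R" and into: "\<And>y. R y \<in> fst A"
  shows "\<exists>K\<ge>0. \<forall>y. norm (snd A (R y)) \<le> K * norm y"
proof (rule closed_graph_bound[where f="\<lambda>y. snd A (R y)"])
  interpret R: bounded_linear R by (rule bl)
  show "linear (\<lambda>y. snd A (R y))"
    by (rule linearI) (simp_all add: R.add R.scaleR op_add[OF cs lin into into] op_scaleR[OF cs lin into])
  fix X x z assume X: "X \<longlonglongrightarrow> x" and z: "(\<lambda>n. snd A (R (X n))) \<longlonglongrightarrow> z"
  have "(\<lambda>n. R (X n)) \<longlonglongrightarrow> R x" using X by (rule R.tendsto)
  moreover have "\<forall>n. R (X n) \<in> fst A" using into by simp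
  moreover have H: "\<And>X x z. (\<forall>n. X n \<in> fst A) \<Longrightarrow> X \<longlonglongrightarrow> x \<Longrightarrow> (\<lambda>n. snd A (X n)) \<longlonglongrightarrow> z
      \<Longrightarrow> x \<in> fst A \<and> snd A x = z" using cl unfolding seq_closed_def by blast
  ultimately show "snd A (R x) = z" using H[of "\<lambda>n. R (X n)" "R x" z] z by blast
qed

lemma res_set_intro:
  fixes J :: "'a::real_normed_vector \<Rightarrow> 'a"
  assumes cs: "complex_structure J" and lin: "linear_op J S"
    and inj: "\<And>x. x \<in> fst S \<Longrightarrow> snd S x - cscale J l x = 0 \<Longrightarrow> x = 0"
    and X: "\<And>y. X y \<in> fst S \<and> snd S (X y) - cscale J l (X y) = y"
    and bd: "\<And>y. norm (X y) \<le> C * norm y"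
  shows "l \<in> resolvent_set J S \<and> (\<forall>y. resolvent J S l y = X y)"
proof -
  have injo: "inj_on (\<lambda>x. snd S x - cscale J l x) (fst S)"
  proof (rule inj_onI)
    fix x x' assume xs: "x \<in> fst S" "x' \<in> fst S" and eq: "snd S x - cscale J l x = snd S x' - cscale J l x'"
    have "snd S (x - x') - cscale J l (x - x') = 0"
      using eq by (simp add: op_diff[OF cs lin xs] cscale_diff_right[OF cs] algebra_simps)
    then have "x - x' = 0" using inj dom_diff[OF cs lin xs] by blast
    then show "x = x'" by simp
  qed
  have sur: "(\<lambda>x. snd S x - cscale J l x) ` fst S = UNIV"
  proof -
    have "y \<in> (\<lambda>x. snd S x - cscale J l x) ` fst S" for y
      using X[of y] by (intro image_eqI[of y _ "X y"]) auto
    then show ?thesis by blast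
  qed
  have bij: "bij_betw (\<lambda>x. snd S x - cscale J l x) (fst S) UNIV"
    using injo sur by (simp add: bij_betw_def)
  have R: "resolvent J S l y = X y" for y
    unfolding resolvent_def using the_inv_into_f_f[OF injo, of "X y"] X[of y] by simp
  have "\<forall>y. norm (resolvent J S l y) \<le> C * norm y" using bd R by simp
  then have "l \<in> resolvent_set J S" using bij unfolding resolvent_set_def by blast
  then show ?thesis using R by blast
qed

lemma res_identity:
  fixes J :: "'a::real_normed_vector \<Rightarrow> 'a"
  assumes cs: "complex_structure J" and lin: "linear_op J S"
    and a: "a \<in> resolvent_set J S" and b: "b \<in> resolvent_set J S"
  shows "resolvent J S b y = resolvent J S a (y + cscale J (b - a) (resolvent J S b y))"
proof (rule res_unique[OF cs lin a, symmetric])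
  let ?x = "resolvent J S b y"
  show "?x \<in> fst S" by (rule res_in[OF cs lin b])
  have "snd S ?x - cscale J a ?x = (snd S ?x - cscale J b ?x) + cscale J (b - a) ?x"
    by (simp add: cscale_diff_left[OF cs] algebra_simps)
  then show "snd S ?x - cscale J a ?x = y + cscale J (b - a) ?x"
    by (simp add: res_eq[OF cs lin b])
qed


lemma op_comp_simps: "fst (op_comp B A) = {x \<in> fst A. snd A x \<in> fst B}" "snd (op_comp B A) x = snd B (snd A x)"
  by (simp_all add: op_comp_def)

lemma L_main:
  fixes J :: "'a::banach \<Rightarrow> 'a"
  assumes cs: "complex_structure J" and linA: "linear_op J A" and linB: "linear_op J B"
    and clA: "seq_closed A" and clB: "seq_closed B"
    and l0: "l \<noteq> 0" and lAB: "l \<in> resolvent_set J (op_comp A B)" and mBA: "m \<in> resolvent_set J (op_comp B A)"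
  shows "l \<in> resolvent_set J (op_comp B A) \<and> (\<forall>y. resolvent J (op_comp B A) l y =
      resolvent J (op_comp B A) m y + cscale J ((l - m) / l)
        (snd B (resolvent J (op_comp A B) l (snd A (resolvent J (op_comp B A) m y))) - resolvent J (op_comp B A) m y))"
proof -
  define Rm where "Rm = resolvent J (op_comp B A) m"
  define S where "S = resolvent J (op_comp A B) l"
  define c where "c = (l - m) / l"
  have cl: "c * l = l - m" using l0 by (simp add: c_def)
  have lc: "l * c = l - m" using cl by (simp add: mult.commute)
  have linBA: "linear_op J (op_comp B A)" by (rule op_comp_linear[OF cs linA linB])
  have linAB: "linear_op J (op_comp A B)" by (rule op_comp_linear[OF cs linB linA])
  have Rm_in: "Rm y \<in> fst A" "snd A (Rm y) \<in> fst B" for y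
    using res_in[OF cs linBA mBA, of y] by (simp_all add: Rm_def op_comp_simps)
  have Rm_eq: "snd B (snd A (Rm y)) - cscale J m (Rm y) = y" for y
    using res_eq[OF cs linBA mBA, of y] by (simp add: Rm_def op_comp_simps)
  have S_in: "S z \<in> fst B" "snd B (S z) \<in> fst A" for z
    using res_in[OF cs linAB lAB, of z] by (simp_all add: S_def op_comp_simps)
  have S_eq: "snd A (snd B (S z)) - cscale J l (S z) = z" for z
    using res_eq[OF cs linAB lAB, of z] by (simp add: S_def op_comp_simps)
  define X where "X y = Rm y + cscale J c (snd B (S (snd A (Rm y))) - Rm y)" for y
  have X: "X y \<in> fst (op_comp B A) \<and> snd (op_comp B A) (X y) - cscale J l (X y) = y" for y
  proof -
    let ?x0 = "Rm y" and ?u = "S (snd A (Rm y))"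
    have v: "snd B ?u - ?x0 \<in> fst A" by (rule dom_diff[OF cs linA S_in(2) Rm_in(1)])
    have Xa: "X y \<in> fst A" unfolding X_def
      by (rule dom_add[OF cs linA Rm_in(1) dom_cscale[OF cs linA v]])
    have "snd A (X y) = snd A ?x0 + cscale J c (snd A (snd B ?u) - snd A ?x0)"
      unfolding X_def
      by (simp add: op_add[OF cs linA Rm_in(1) dom_cscale[OF cs linA v]] op_cscale[OF cs linA v]
           op_diff[OF cs linA S_in(2) Rm_in(1)])
    also have "snd A (snd B ?u) - snd A ?x0 = cscale J l ?u"
      using S_eq[of "snd A ?x0"] by (simp add: algebra_simps)
    finally have AX: "snd A (X y) = snd A ?x0 + cscale J (l - m) ?u"
      by (simp add: cscale_mult[OF cs] cl)
    have AXB: "snd A (X y) \<in> fst B" unfolding AX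
      by (rule dom_add[OF cs linB Rm_in(2) dom_cscale[OF cs linB S_in(1)]])
    have BAX: "snd B (snd A (X y)) = snd B (snd A ?x0) + cscale J (l - m) (snd B ?u)"
      unfolding AX by (simp add: op_add[OF cs linB Rm_in(2) dom_cscale[OF cs linB S_in(1)]] op_cscale[OF cs linB S_in(1)])
    have lX: "cscale J l (X y) = cscale J l ?x0 + cscale J (l - m) (snd B ?u) - cscale J (l - m) ?x0"
      unfolding X_def by (simp add: cscale_add_right[OF cs] cscale_diff_right[OF cs] cscale_mult[OF cs] lc)
    have "snd B (snd A (X y)) - cscale J l (X y) = snd B (snd A ?x0) - cscale J m ?x0"
      unfolding BAX lX by (simp add: cscale_diff_left[OF cs] algebra_simps)
    then have "snd B (snd A (X y)) - cscale J l (X y) = y" using Rm_eq by simp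
    then show ?thesis using Xa AXB by (simp add: op_comp_simps)
  qed
  have inj: "x = 0" if x: "x \<in> fst (op_comp B A)" "snd (op_comp B A) x - cscale J l x = 0" for x
  proof -
    have xA: "x \<in> fst A" and xB: "snd A x \<in> fst B" using x by (simp_all add: op_comp_simps)
    have BAx: "snd B (snd A x) = cscale J l x" using x by (simp add: op_comp_simps)
    have vAB: "snd A x \<in> fst (op_comp A B)"
      using xB BAx dom_cscale[OF cs linA xA] by (simp add: op_comp_simps)
    have "snd (op_comp A B) (snd A x) - cscale J l (snd A x) = 0"
      by (simp add: op_comp_simps BAx op_cscale[OF cs linA xA])
    then have "S 0 = snd A x" unfolding S_def by (rule res_unique[OF cs linAB lAB vAB])
    moreover have "S 0 = 0" unfolding S_def
      by (rule res_unique[OF cs linAB lAB dom0[OF cs linAB]]) (simp add: op_comp_simps op_0[OF cs linA] op_0[OF cs linB] cscale_zero_right[OF cs])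
    ultimately have "snd A x = 0" by simp
    then have "cscale J l x = 0" using BAx op_0[OF cs linB] by simp
    then have "cscale J (1/l) (cscale J l x) = 0" by (simp add: cscale_zero_right[OF cs])
    then show "x = 0" using l0 by (simp add: cscale_mult[OF cs] cscale_one[OF cs])
  qed
  obtain K1 where K1: "K1 \<ge> 0" "\<And>y. norm (snd A (Rm y)) \<le> K1 * norm y"
    using CG_comp[OF cs linA clA res_bl[OF cs linBA mBA] Rm_in(1)[unfolded Rm_def]] unfolding Rm_def by blast
  obtain K2 where K2: "K2 \<ge> 0" "\<And>z. norm (snd B (S z)) \<le> K2 * norm z"
    using CG_comp[OF cs linB clB res_bl[OF cs linAB lAB] S_in(1)[unfolded S_def]] unfolding S_def by blast
  define N where "N = onorm Rm"
  have N: "norm (Rm y) \<le> N * norm y" for y unfolding N_def Rm_def by (rule res_onorm[OF cs linBA mBA])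
  have bd: "norm (X y) \<le> (N + cmod c * (K2 * K1 + N)) * norm y" for y
  proof -
    have "norm (X y) \<le> norm (Rm y) + cmod c * (norm (snd B (S (snd A (Rm y)))) + norm (Rm y))"
      unfolding X_def
      by (rule order_trans[OF norm_triangle_ineq])
         (simp add: norm_cscale[OF cs] mult_left_mono norm_triangle_ineq4)
    also have "\<dots> \<le> N * norm y + cmod c * (K2 * (K1 * norm y) + N * norm y)"
    proof -
      have "norm (snd B (S (snd A (Rm y)))) \<le> K2 * (K1 * norm y)"
        using K2(2)[of "snd A (Rm y)"] K1(2)[of y] K2(1) by (meson mult_left_mono order_trans)
      then show ?thesis using N[of y] by (intro add_mono mult_left_mono) auto
    qed
    also have "\<dots> = (N + cmod c * (K2 * K1 + N)) * norm y" by (simp add: algebra_simps)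
    finally show ?thesis .
  qed
  have "l \<in> resolvent_set J (op_comp B A) \<and> (\<forall>y. resolvent J (op_comp B A) l y = X y)"
    by (rule res_set_intro[OF cs linBA inj X bd])
  then show ?thesis unfolding X_def Rm_def S_def c_def by simp
qed

lemma scalar_bound:
  fixes a d \<mu> M1 M2 K P :: real
  assumes a: "a > 0" and d: "d \<ge> 0" and mu: "\<mu> \<ge> 0" and M1: "M1 \<ge> 1" and M2: "M2 \<ge> 1"
    and K: "K \<ge> 0" and P: "P \<ge> 4" and tri: "a \<le> \<mu> + d"
  shows "M2 + d / a * (K * P * M1 * M2 + M2) \<le> (1 + K) * M1 * M2 / a * (\<mu> + d * P)"
proof -
  have "(a + d) * M2 \<le> (\<mu> + 2 * d) * M2" using tri M2 by (intro mult_right_mono) auto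
  then have "a * M2 + d * M2 \<le> (\<mu> + 2 * d) * M2" by (simp add: algebra_simps)
  also have "\<dots> \<le> (\<mu> + d * P) * M2"
  proof -
    have "d * 2 \<le> d * P" using P d by (intro mult_left_mono) auto
    then show ?thesis using M2 by (intro mult_right_mono) auto
  qed
  also have "\<dots> \<le> (\<mu> + d * P) * M1 * M2"
  proof -
    have "0 \<le> (\<mu> + d * P) * M2" using mu d P M2 by simp
    then have "(\<mu> + d * P) * M2 * 1 \<le> (\<mu> + d * P) * M2 * M1" using M1 by (intro mult_left_mono) auto
    then show ?thesis by (simp add: algebra_simps)
  qed
  finally have h1: "a * M2 + d * M2 \<le> (\<mu> + d * P) * M1 * M2" .
  have h2: "d * (K * P * M1 * M2) \<le> K * M1 * M2 * (\<mu> + d * P)"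
  proof -
    have "0 \<le> K * M1 * M2 * \<mu>" using K M1 M2 mu by simp
    then show ?thesis by (simp add: algebra_simps)
  qed
  have "M2 + d / a * (K * P * M1 * M2 + M2) = (a * M2 + d * M2 + d * (K * P * M1 * M2)) / a"
    using a by (simp add: field_simps)
  also have "\<dots> \<le> ((1 + K) * M1 * M2 * (\<mu> + d * P)) / a"
    using h1 h2 a by (intro divide_right_mono) (auto simp: algebra_simps)
  also have "\<dots> = (1 + K) * M1 * M2 / a * (\<mu> + d * P)" by simp
  finally show ?thesis .
qed

lemma comp_res_bound:
  fixes J :: "'a::banach \<Rightarrow> 'a"
  assumes cs: "complex_structure J" and linA: "linear_op J A" and linS: "linear_op J S"
    and into: "\<And>y. resolvent J S n y \<in> fst A" and nS: "n \<in> resolvent_set J S"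
    and K: "K \<ge> 0" "\<And>y. norm (snd A (resolvent J S n y)) \<le> K * norm y"
    and mS: "m \<in> resolvent_set J S"
  shows "norm (snd A (resolvent J S m y)) \<le> K * (1 + cmod (m - n)) * max 1 (onorm (resolvent J S m)) * norm y"
proof -
  let ?M = "max 1 (onorm (resolvent J S m))"
  have "resolvent J S m y = resolvent J S n (y + cscale J (m - n) (resolvent J S m y))"
    by (rule res_identity[OF cs linS nS mS])
  then have "norm (snd A (resolvent J S m y)) \<le> K * norm (y + cscale J (m - n) (resolvent J S m y))"
    using K(2) by metis
  also have "\<dots> \<le> K * (norm y + cmod (m - n) * (?M * norm y))"
  proof (intro mult_left_mono K(1))
    have "norm (resolvent J S m y) \<le> ?M * norm y"
      using res_onorm[OF cs linS mS, of y] by (rule order_trans) (simp add: mult_right_mono)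
    then show "norm (y + cscale J (m - n) (resolvent J S m y)) \<le> norm y + cmod (m - n) * (?M * norm y)"
      by (intro order_trans[OF norm_triangle_ineq]) (simp add: norm_cscale[OF cs] mult_left_mono)
  qed
  also have "\<dots> \<le> K * (1 + cmod (m - n)) * ?M * norm y"
  proof -
    have "1 * norm y \<le> ?M * norm y" by (rule mult_right_mono) auto
    then have "norm y \<le> ?M * norm y" by simp
    then have "norm y + cmod (m - n) * (?M * norm y) \<le> (1 + cmod (m - n)) * ?M * norm y"
      by (simp add: algebra_simps)
    then show ?thesis using K(1) by (simp add: mult_left_mono mult.assoc)
  qed
  finally show ?thesis .
qed


lemma E_bound: "1 + cmod (l - n) \<le> (1 + cmod n) * (2 + cmod l)"
proof -
  have "cmod (l - n) \<le> cmod l + cmod n" by (rule norm_triangle_ineq4)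
  moreover have "0 \<le> cmod n * cmod l" "0 \<le> cmod n" by simp_all
  moreover have "(1 + cmod n) * (2 + cmod l) = 2 + cmod l + 2 * cmod n + cmod n * cmod l"
    by (simp add: algebra_simps)
  ultimately show ?thesis by linarith
qed

lemma G_main:
  fixes J :: "'a::banach \<Rightarrow> 'a"
  assumes cs: "complex_structure J" and linA: "linear_op J A" and linB: "linear_op J B"
    and clA: "seq_closed A" and clB: "seq_closed B"
    and n0: "n0 \<in> resolvent_set J (op_comp B A)" and n1: "n1 \<in> resolvent_set J (op_comp A B)"
  shows "\<exists>C>0. \<forall>l\<in>resolvent_set J (op_comp B A). \<forall>m\<in>resolvent_set J (op_comp B A).
          l \<noteq> 0 \<longrightarrow>
          onorm (resolvent J (op_comp B A) l)
            \<le> C * max 1 (onorm (resolvent J (op_comp A B) l))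
                * max 1 (onorm (resolvent J (op_comp B A) m)) / cmod l
              * (cmod m + cmod (l - m) * (2 + cmod l) * (2 + cmod m))"
proof -
  have linBA: "linear_op J (op_comp B A)" by (rule op_comp_linear[OF cs linA linB])
  have linAB: "linear_op J (op_comp A B)" by (rule op_comp_linear[OF cs linB linA])
  have intoA: "resolvent J (op_comp B A) k y \<in> fst A" if "k \<in> resolvent_set J (op_comp B A)" for k y
    using res_in[OF cs linBA that, of y] by (simp add: op_comp_simps)
  have intoB: "resolvent J (op_comp A B) k y \<in> fst B" if "k \<in> resolvent_set J (op_comp A B)" for k y
    using res_in[OF cs linAB that, of y] by (simp add: op_comp_simps)
  obtain KA where KA: "KA \<ge> 0" "\<And>y. norm (snd A (resolvent J (op_comp B A) n0 y)) \<le> KA * norm y"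
    using CG_comp[OF cs linA clA res_bl[OF cs linBA n0] intoA[OF n0]] by blast
  obtain KB where KB: "KB \<ge> 0" "\<And>y. norm (snd B (resolvent J (op_comp A B) n1 y)) \<le> KB * norm y"
    using CG_comp[OF cs linB clB res_bl[OF cs linAB n1] intoB[OF n1]] by blast
  define K where "K = KA * KB * (1 + cmod n0) * (1 + cmod n1)"
  have K0: "K \<ge> 0" using KA KB by (simp add: K_def)
  show ?thesis
  proof (intro exI[of _ "1 + K"] conjI ballI impI)
    show "0 < 1 + K" using K0 by simp
    fix l m assume l: "l \<in> resolvent_set J (op_comp B A)" and m: "m \<in> resolvent_set J (op_comp B A)"
      and l0: "l \<noteq> 0"
    have lAB: "l \<in> resolvent_set J (op_comp A B)"
      using L_main[OF cs linB linA clB clA l0 l n1] by blast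
    define R where "R = resolvent J (op_comp B A) l"
    define Rm where "Rm = resolvent J (op_comp B A) m"
    define S where "S = resolvent J (op_comp A B) l"
    define M1 where "M1 = max 1 (onorm S)"
    define M2 where "M2 = max 1 (onorm Rm)"
    define c where "c = (l - m) / l"
    have form: "R y = Rm y + cscale J c (snd B (S (snd A (Rm y))) - Rm y)" for y
      using L_main[OF cs linA linB clA clB l0 lAB m] unfolding R_def Rm_def S_def c_def by blast
    have bA: "norm (snd A (Rm y)) \<le> KA * (1 + cmod (m - n0)) * M2 * norm y" for y
      unfolding Rm_def M2_def
      by (rule comp_res_bound[OF cs linA linBA intoA[OF n0] n0 KA m])
    have bB: "norm (snd B (S z)) \<le> KB * (1 + cmod (l - n1)) * M1 * norm z" for z
      unfolding S_def M1_def
      by (rule comp_res_bound[OF cs linB linAB intoB[OF n1] n1 KB lAB])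
    have bRm: "norm (Rm y) \<le> M2 * norm y" for y
      using res_onorm[OF cs linBA m, of y] unfolding Rm_def M2_def
      by (rule order_trans) (simp add: mult_right_mono)
    define P where "P = (2 + cmod l) * (2 + cmod m)"
    have P4: "P \<ge> 4"
    proof -
      have "2 * 2 \<le> (2 + cmod l) * (2 + cmod m)" by (intro mult_mono) auto
      then show ?thesis by (simp add: P_def)
    qed
    have M1: "M1 \<ge> 1" and M2: "M2 \<ge> 1" by (simp_all add: M1_def M2_def)
    have EE: "(1 + cmod (l - n1)) * (1 + cmod (m - n0)) \<le> ((1 + cmod n1) * (2 + cmod l)) * ((1 + cmod n0) * (2 + cmod m))"
      by (intro mult_mono E_bound) auto
    have bBA: "norm (snd B (S (snd A (Rm y)))) \<le> K * P * M1 * M2 * norm y" for y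
    proof -
      have "norm (snd B (S (snd A (Rm y)))) \<le> KB * (1 + cmod (l - n1)) * M1 * norm (snd A (Rm y))"
        by (rule bB)
      also have "\<dots> \<le> KB * (1 + cmod (l - n1)) * M1 * (KA * (1 + cmod (m - n0)) * M2 * norm y)"
        using KB(1) M1 by (intro mult_left_mono bA) auto
      also have "\<dots> = (KA * KB * M1 * M2 * norm y) * ((1 + cmod (l - n1)) * (1 + cmod (m - n0)))"
        by (simp add: algebra_simps)
      also have "\<dots> \<le> (KA * KB * M1 * M2 * norm y) * (((1 + cmod n1) * (2 + cmod l)) * ((1 + cmod n0) * (2 + cmod m)))"
        using KA(1) KB(1) M1 M2 by (intro mult_left_mono EE) auto
      also have "\<dots> = K * P * M1 * M2 * norm y" by (simp add: K_def P_def algebra_simps)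
      finally show ?thesis .
    qed
    have bR: "norm (R y) \<le> (M2 + cmod c * (K * P * M1 * M2 + M2)) * norm y" for y
    proof -
      have "norm (R y) \<le> norm (Rm y) + cmod c * (norm (snd B (S (snd A (Rm y)))) + norm (Rm y))"
        unfolding form
        by (rule order_trans[OF norm_triangle_ineq])
           (simp add: norm_cscale[OF cs] mult_left_mono norm_triangle_ineq4)
      also have "\<dots> \<le> M2 * norm y + cmod c * (K * P * M1 * M2 * norm y + M2 * norm y)"
        using bRm[of y] bBA[of y] by (intro add_mono mult_left_mono) auto
      also have "\<dots> = (M2 + cmod c * (K * P * M1 * M2 + M2)) * norm y" by (simp add: algebra_simps)
      finally show ?thesis .
    qed
    have cc: "cmod c = cmod (l - m) / cmod l" by (simp add: c_def norm_divide)
    have tri: "cmod l \<le> cmod m + cmod (l - m)"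
      using norm_triangle_ineq[of m "l - m"] by simp
    have sb: "M2 + cmod c * (K * P * M1 * M2 + M2) \<le> (1 + K) * M1 * M2 / cmod l * (cmod m + cmod (l - m) * P)"
      unfolding cc by (rule scalar_bound) (use l0 M1 M2 K0 P4 tri in auto)
    have "onorm R \<le> (1 + K) * M1 * M2 / cmod l * (cmod m + cmod (l - m) * P)"
    proof (rule onorm_bound)
      show "0 \<le> (1 + K) * M1 * M2 / cmod l * (cmod m + cmod (l - m) * P)"
        using K0 M1 M2 P4 by simp
      fix y show "norm (R y) \<le> (1 + K) * M1 * M2 / cmod l * (cmod m + cmod (l - m) * P) * norm y"
        using bR[of y] sb by (rule order_trans[OF _ mult_right_mono]) simp
    qed
    then show "onorm (resolvent J (op_comp B A) l)
            \<le> (1 + K) * max 1 (onorm (resolvent J (op_comp A B) l))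
                * max 1 (onorm (resolvent J (op_comp B A) m)) / cmod l
              * (cmod m + cmod (l - m) * (2 + cmod l) * (2 + cmod m))"
      by (simp add: R_def M1_def M2_def S_def Rm_def P_def mult.assoc)
  qed
qed

context
  fixes J :: "'a::banach \<Rightarrow> 'a" and ip :: "'a \<Rightarrow> 'a \<Rightarrow> complex"
  assumes ks: "krein_space J ip"
begin

lemma ks_cs: "complex_structure J" using ks unfolding krein_space_def by blast
lemma ks_herm: "hermitian_form J ip" using ks unfolding krein_space_def by blast

lemma ip_add1: "ip (x + y) z = ip x z + ip y z" using ks_herm unfolding hermitian_form_def by blast
lemma ip_cscale1: "ip (cscale J c x) y = c * ip x y" using ks_herm unfolding hermitian_form_def by blast
lemma ip_conj: "ip y x = cnj (ip x y)" using ks_herm unfolding hermitian_form_def by blast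
lemma ip_add2: "ip x (y + z) = ip x y + ip x z"
  by (simp add: ip_conj[of x] ip_add1)
lemma ip_cscale2: "ip x (cscale J c y) = cnj c * ip x y"
  by (simp add: ip_conj[of x] ip_cscale1)
lemma ip_zero2: "ip x 0 = 0"
  using ip_cscale2[of x 0 0] by (simp add: cscale_zero_left[OF ks_cs])
lemma ip_zero1: "ip 0 x = 0"
  using ip_cscale1[of 0 0 x] by (simp add: cscale_zero_left[OF ks_cs])
lemma ip_diff2: "ip x (y - z) = ip x y - ip x z"
proof -
  have "ip x (y - z) = ip x (y + cscale J (-1) z)" by (simp add: cscale_minus_one[OF ks_cs])
  also have "\<dots> = ip x y - ip x z" by (simp add: ip_add2 ip_cscale2)
  finally show ?thesis .
qed

lemma ip_bound: "\<exists>c. \<forall>x y. cmod (ip x y) \<le> c * norm x * norm y"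
  using ks unfolding krein_space_def by blast

lemma ip_tendsto2:
  assumes Y: "Y \<longlonglongrightarrow> y" shows "(\<lambda>n. ip a (Y n)) \<longlonglongrightarrow> ip a y"
proof -
  obtain c where c: "\<And>x y. cmod (ip x y) \<le> c * norm x * norm y" using ip_bound by blast
  have "(\<lambda>n. ip a (Y n) - ip a y) \<longlonglongrightarrow> 0"
  proof (rule Lim_null_comparison[where g="\<lambda>n. (c * norm a) * norm (Y n - y)"])
    show "\<forall>\<^sub>F n in sequentially. norm (ip a (Y n) - ip a y) \<le> c * norm a * norm (Y n - y)"
      using c by (simp add: ip_diff2[symmetric])
    have "(\<lambda>n. Y n - y) \<longlonglongrightarrow> 0" using Y by (rule LIM_zero)
    then have "(\<lambda>n. norm (Y n - y)) \<longlonglongrightarrow> 0" by (rule tendsto_norm_zero)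
    then show "(\<lambda>n. (c * norm a) * norm (Y n - y)) \<longlonglongrightarrow> 0" by (rule tendsto_mult_right_zero)
  qed
  then show ?thesis by (rule LIM_zero_cancel)
qed

lemma ip_tendsto1:
  assumes X: "X \<longlonglongrightarrow> x" shows "(\<lambda>n. ip (X n) w) \<longlonglongrightarrow> ip x w"
proof -
  have "(\<lambda>n. cnj (ip w (X n))) \<longlonglongrightarrow> cnj (ip w x)"
    by (intro tendsto_cnj ip_tendsto2 X)
  then show ?thesis by (simp add: ip_conj[of w])
qed

lemma nondeg: assumes "\<And>x. ip x w = 0" shows "w = 0"
proof -
  obtain Kp Km where sub: "csubspace J Kp" "csubspace J Km"
    and dec: "\<forall>x. \<exists>p\<in>Kp. \<exists>m\<in>Km. x = p + m"
    and orth: "\<forall>p\<in>Kp. \<forall>m\<in>Km. ip p m = 0"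
    and hp: "hilbert_part ip 1 Kp" and hm: "hilbert_part ip (-1) Km"
    using ks[unfolded krein_space_def, THEN conjunct2, THEN conjunct2, THEN conjunct2] by (elim exE conjE)
  obtain p m where pm: "p \<in> Kp" "m \<in> Km" "w = p + m" using dec by blast
  have pm0: "ip p m = 0" using orth pm by blast
  have "ip p w = ip p p + ip p m" using pm by (simp add: ip_add2)
  then have "ip p p = 0" using assms[of p] pm0 by simp
  moreover have "\<forall>x\<in>Kp. x \<noteq> 0 \<longrightarrow> 1 * Re (ip x x) > 0" using hp[unfolded hilbert_part_def, THEN conjunct1] .
  ultimately have p0: "p = 0" using pm(1) by force
  have "ip m p = cnj (ip p m)" by (rule ip_conj)
  then have mp0: "ip m p = 0" using pm0 by simp
  have "ip m w = ip m p + ip m m" using pm by (simp add: ip_add2)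
  then have "ip m m = 0" using assms[of m] mp0 by simp
  moreover have "\<forall>x\<in>Km. x \<noteq> 0 \<longrightarrow> (-1) * Re (ip x x) > 0" using hm[unfolded hilbert_part_def, THEN conjunct1] .
  ultimately have m0: "m = 0" using pm(2) by force
  show ?thesis using pm p0 m0 by simp
qed

lemma dense_nondeg:
  assumes dd: "densely_defined T" and h: "\<And>x. x \<in> fst T \<Longrightarrow> ip x w = 0" shows "w = 0"
proof (rule nondeg)
  fix x
  have cl: "closed {x. ip x w = 0}"
    unfolding closed_sequential_limits
  proof (intro allI impI)
    fix X l assume "(\<forall>n. X n \<in> {x. ip x w = 0}) \<and> X \<longlonglongrightarrow> l"
    then have z: "\<forall>n. ip (X n) w = 0" and Xl: "X \<longlonglongrightarrow> l" by auto
    have t: "(\<lambda>n. ip (X n) w) \<longlonglongrightarrow> ip l w" using Xl by (rule ip_tendsto1)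
    have e: "(\<lambda>n. ip (X n) w) = (\<lambda>n. 0)" using z by simp
    have "(\<lambda>n. 0::complex) \<longlonglongrightarrow> 0" by simp
    then have "ip l w = 0" using t unfolding e by (rule LIMSEQ_unique[rotated])
    then show "l \<in> {x. ip x w = 0}" by simp
  qed
  have "fst T \<subseteq> {x. ip x w = 0}" using h by blast
  then have "closure (fst T) \<subseteq> {x. ip x w = 0}" using cl by (rule closure_minimal)
  then show "ip x w = 0" using dd unfolding densely_defined_def by blast
qed

context
  fixes T :: "'a lop"
  assumes linT: "linear_op J T" and dd: "densely_defined T"
begin

lemma adj_unique:
  assumes "\<forall>x\<in>fst T. ip (snd T x) y = ip x z" "\<forall>x\<in>fst T. ip (snd T x) y = ip x z'"
  shows "z = z'"
proof -
  have "z - z' = 0"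
    by (rule dense_nondeg[OF dd]) (use assms in \<open>simp add: ip_diff2\<close>)
  then show ?thesis by simp
qed

lemma adj_char:
  assumes "\<forall>x\<in>fst T. ip (snd T x) y = ip x z"
  shows "y \<in> fst (kadj ip T) \<and> snd (kadj ip T) y = z"
proof
  show "y \<in> fst (kadj ip T)" using assms by (auto simp: kadj_def)
  show "snd (kadj ip T) y = z" unfolding kadj_def snd_conv
    by (rule the_equality[where P="\<lambda>z. \<forall>x\<in>fst T. ip (snd T x) y = ip x z", OF assms])
       (rule adj_unique[OF _ assms])
qed

lemma adj_eq:
  assumes "y \<in> fst (kadj ip T)"
  shows "\<forall>x\<in>fst T. ip (snd T x) y = ip x (snd (kadj ip T) y)"
proof -
  obtain z where z: "\<forall>x\<in>fst T. ip (snd T x) y = ip x z" using assms by (auto simp: kadj_def)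
  then show ?thesis using adj_char[OF z] by simp
qed

lemma adj_linear: "linear_op J (kadj ip T)"
proof -
  let ?B = "kadj ip T"
  have z0: "\<forall>x\<in>fst T. ip (snd T x) 0 = ip x 0" by (simp add: ip_zero2)
  have add: "\<forall>x\<in>fst T. ip (snd T x) (y1 + y2) = ip x (snd ?B y1 + snd ?B y2)"
    if "y1 \<in> fst ?B" "y2 \<in> fst ?B" for y1 y2
    using adj_eq[OF that(1)] adj_eq[OF that(2)] by (simp add: ip_add2)
  have sc: "\<forall>x\<in>fst T. ip (snd T x) (cscale J c y) = ip x (cscale J c (snd ?B y))"
    if "y \<in> fst ?B" for c y
    using adj_eq[OF that] by (simp add: ip_cscale2)
  have d0: "0 \<in> fst ?B" using adj_char[OF z0] by simp
  have dadd: "y1 + y2 \<in> fst ?B" and madd: "snd ?B (y1 + y2) = snd ?B y1 + snd ?B y2"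
    if "y1 \<in> fst ?B" "y2 \<in> fst ?B" for y1 y2
    using adj_char[OF add[OF that]] by simp_all
  have dsc: "cscale J c y \<in> fst ?B" and msc: "snd ?B (cscale J c y) = cscale J c (snd ?B y)"
    if "y \<in> fst ?B" for c y
    using adj_char[OF sc[OF that]] by simp_all
  show ?thesis
    unfolding linear_op_def csubspace_def
    using d0 dadd madd dsc msc by simp
qed

lemma adj_closed: "seq_closed (kadj ip T)"
  unfolding seq_closed_def
proof (intro allI impI)
  let ?B = "kadj ip T"
  fix Y y z assume Yin: "\<forall>n. Y n \<in> fst ?B" and Y: "Y \<longlonglongrightarrow> y" and Z: "(\<lambda>n. snd ?B (Y n)) \<longlonglongrightarrow> z"
  have "\<forall>x\<in>fst T. ip (snd T x) y = ip x z"
  proof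
    fix x assume x: "x \<in> fst T"
    have "(\<lambda>n. ip (snd T x) (Y n)) \<longlonglongrightarrow> ip (snd T x) y" by (rule ip_tendsto2[OF Y])
    moreover have "(\<lambda>n. ip (snd T x) (Y n)) = (\<lambda>n. ip x (snd ?B (Y n)))"
      using adj_eq Yin x by blast
    moreover have "(\<lambda>n. ip x (snd ?B (Y n))) \<longlonglongrightarrow> ip x z" by (rule ip_tendsto2[OF Z])
    ultimately show "ip (snd T x) y = ip x z" by (simp add: LIMSEQ_unique)
  qed
  then show "y \<in> fst ?B \<and> snd ?B y = z" by (rule adj_char)
qed

end
end

lemma closed_op_seq:
  fixes T :: "'a::real_normed_vector lop"
  assumes "closed_op T" shows "seq_closed T"
  unfolding seq_closed_def
proof (intro allI impI)
  fix X x z assume Xin: "\<forall>n. X n \<in> fst T" and X: "X \<longlonglongrightarrow> x" and Z: "(\<lambda>n. snd T (X n)) \<longlonglongrightarrow> z"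
  let ?G = "{(x, snd T x) | x. x \<in> fst T}"
  have "closed ?G" using assms by (simp add: closed_op_def)
  moreover have "\<forall>n. (X n, snd T (X n)) \<in> ?G" using Xin by blast
  moreover have "(\<lambda>n. (X n, snd T (X n))) \<longlonglongrightarrow> (x, z)" by (intro tendsto_Pair X Z)
  ultimately have "(x, z) \<in> ?G" unfolding closed_sequential_limits by (elim allE[of _ "\<lambda>n. (X n, snd T (X n))"]) simp
  then show "x \<in> fst T \<and> snd T x = z" by auto
qed

theorem theorem2p2:
  fixes J :: "'a::{real_normed_vector,banach} \<Rightarrow> 'a"
    and ip :: "'a \<Rightarrow> 'a \<Rightarrow> complex"
    and T :: "'a lop"
  assumes "krein_space J ip"
    and "linear_op J T" and "closed_op T" and "densely_defined T"
    and "resolvent_set J (op_comp (kadj ip T) T) \<noteq> {}"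
    and "resolvent_set J (op_comp T (kadj ip T)) \<noteq> {}"
  shows "spectrum_op J (op_comp (kadj ip T) T) - {0} = spectrum_op J (op_comp T (kadj ip T)) - {0}
    \<and> (\<exists>C>0. \<forall>l\<in>resolvent_set J (op_comp (kadj ip T) T). \<forall>m\<in>resolvent_set J (op_comp (kadj ip T) T).
          l \<noteq> 0 \<longrightarrow>
          onorm (resolvent J (op_comp (kadj ip T) T) l)
            \<le> C * max 1 (onorm (resolvent J (op_comp T (kadj ip T)) l))
                * max 1 (onorm (resolvent J (op_comp (kadj ip T) T) m)) / cmod l
              * (cmod m + cmod (l - m) * (2 + cmod l) * (2 + cmod m)))"
proof -
  note ks = assms(1)
  have cs: "complex_structure J" by (rule ks_cs[OF ks])
  have linA: "linear_op J T" by (rule assms(2))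
  have linB: "linear_op J (kadj ip T)" by (rule adj_linear[OF ks assms(2) assms(4)])
  have clA: "seq_closed T" by (rule closed_op_seq[OF assms(3)])
  have clB: "seq_closed (kadj ip T)" by (rule adj_closed[OF ks assms(2) assms(4)])
  obtain n0 where n0: "n0 \<in> resolvent_set J (op_comp (kadj ip T) T)" using assms(5) by blast
  obtain n1 where n1: "n1 \<in> resolvent_set J (op_comp T (kadj ip T))" using assms(6) by blast
  have eq: "l \<in> resolvent_set J (op_comp (kadj ip T) T) \<longleftrightarrow> l \<in> resolvent_set J (op_comp T (kadj ip T))"
    if l0: "l \<noteq> 0" for l
  proof
    assume "l \<in> resolvent_set J (op_comp (kadj ip T) T)"
    then show "l \<in> resolvent_set J (op_comp T (kadj ip T))"
      using L_main[OF cs linB linA clB clA l0 _ n1] by blast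
  next
    assume "l \<in> resolvent_set J (op_comp T (kadj ip T))"
    then show "l \<in> resolvent_set J (op_comp (kadj ip T) T)"
      using L_main[OF cs linA linB clA clB l0 _ n0] by blast
  qed
  have part1: "spectrum_op J (op_comp (kadj ip T) T) - {0} = spectrum_op J (op_comp T (kadj ip T)) - {0}"
    unfolding spectrum_op_def using eq by blast
  show ?thesis using part1 G_main[OF cs linA linB clA clB n0 n1] by blast
qed

end
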